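(* Let $\Gamma\curvearrowright X, I$ be a dynamical ideal. If it has cofinal orbits, then Player II has a winning strategy in the DC game.
   Context: A dynamical ideal $\Gamma\curvearrowright X, I$: a group $\Gamma$ acting on a set $X$ and an ideal $I$ on $X$ containing all singletons and invariant under the action ($\gamma\cdot a=\{\gamma\cdot x:x\in a\}\in I$ for $a\in I$). For $a\subseteq X$, $\mathrm{pstab}(a)=\{\gamma\in\Gamma:\gamma\cdot x=x\ \forall x\in a\}$. For $a,b\in I$, $b$ is $a$-large if for every $c\in I$ there is $\gamma\in\mathrm{pstab}(a)$ with $c\subseteq\gamma\cdot b$; the dynamical ideal has cofinal orbits if every $a\in I$ has an $a$-large $b\in I$. The DC game: players I and II alternate for $\omega$ rounds; at round $n$ Player I plays $a_n\in I$ and Player II answers with $\gamma_n\in\Gamma$, subject to $\gamma_0=1$ and $\gamma_n$ fixes every element of $\bigcup_{m<n}\gamma_m\cdot a_m$. Player II wins if $\bigcup_n\gamma_n\cdot a_n\in I$. *)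

theory Defs
  imports "HOL-Algebra.Group_Action"
begin

definition is_ideal_on :: "'x set \<Rightarrow> 'x set set \<Rightarrow> bool" where
  "is_ideal_on X I \<longleftrightarrow> I \<subseteq> Pow X \<and> {} \<in> I \<and>
     (\<forall>a\<in>I. \<forall>b. b \<subseteq> a \<longrightarrow> b \<in> I) \<and>
     (\<forall>a\<in>I. \<forall>b\<in>I. a \<union> b \<in> I)"

definition dynamical_ideal ::
  "('g, 'm) monoid_scheme \<Rightarrow> 'x set \<Rightarrow> ('g \<Rightarrow> 'x \<Rightarrow> 'x) \<Rightarrow> 'x set set \<Rightarrow> bool" where
  "dynamical_ideal G X \<phi> I \<longleftrightarrow> group_action G X \<phi> \<and> is_ideal_on X I \<and>
     (\<forall>x\<in>X. {x} \<in> I) \<and>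
     (\<forall>g\<in>carrier G. \<forall>a\<in>I. \<phi> g ` a \<in> I)"

definition pstab ::
  "('g, 'm) monoid_scheme \<Rightarrow> ('g \<Rightarrow> 'x \<Rightarrow> 'x) \<Rightarrow> 'x set \<Rightarrow> 'g set" where
  "pstab G \<phi> a = {g \<in> carrier G. \<forall>x\<in>a. \<phi> g x = x}"

definition is_large ::
  "('g, 'm) monoid_scheme \<Rightarrow> ('g \<Rightarrow> 'x \<Rightarrow> 'x) \<Rightarrow> 'x set set \<Rightarrow> 'x set \<Rightarrow> 'x set \<Rightarrow> bool" where
  "is_large G \<phi> I a b \<longleftrightarrow> (\<forall>c\<in>I. \<exists>g\<in>pstab G \<phi> a. c \<subseteq> \<phi> g ` b)"

definition cofinal_orbits ::
  "('g, 'm) monoid_scheme \<Rightarrow> ('g \<Rightarrow> 'x \<Rightarrow> 'x) \<Rightarrow> 'x set set \<Rightarrow> bool" where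
  "cofinal_orbits G \<phi> I \<longleftrightarrow> (\<forall>a\<in>I. \<exists>b\<in>I. is_large G \<phi> I a b)"

text \<open>A strategy for Player II maps the finite list of Player I's moves
[a_0, ..., a_n] to the answer gamma_n (Player II's earlier answers are determined
by the strategy itself).\<close>
definition play_II :: "('x set list \<Rightarrow> 'g) \<Rightarrow> (nat \<Rightarrow> 'x set) \<Rightarrow> nat \<Rightarrow> 'g" where
  "play_II \<sigma> a n = \<sigma> (map a [0..<Suc n])"

definition DC_winning_II ::
  "('g, 'm) monoid_scheme \<Rightarrow> ('g \<Rightarrow> 'x \<Rightarrow> 'x) \<Rightarrow> 'x set set \<Rightarrow> ('x set list \<Rightarrow> 'g) \<Rightarrow> bool" where
  "DC_winning_II G \<phi> I \<sigma> \<longleftrightarrow>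
     (\<forall>a. (\<forall>n. a n \<in> I) \<longrightarrow>
        (let \<gamma> = play_II \<sigma> a in
          \<gamma> 0 = \<one>\<^bsub>G\<^esub> \<and>
          (\<forall>n. \<gamma> n \<in> pstab G \<phi> (\<Union>m<n. \<phi> (\<gamma> m) ` a m)) \<and>
          (\<Union>n. \<phi> (\<gamma> n) ` a n) \<in> I))"

end

theory Submission
  imports Defs
begin

lemma di_facts:
  assumes "dynamical_ideal G X \<phi> I"
  shows "group_action G X \<phi>" "group G" "I \<subseteq> Pow X" "{} \<in> I"
    "\<And>a b. a \<in> I \<Longrightarrow> b \<subseteq> a \<Longrightarrow> b \<in> I"
    "\<And>a b. a \<in> I \<Longrightarrow> b \<in> I \<Longrightarrow> a \<union> b \<in> I"
    "\<And>g a. g \<in> carrier G \<Longrightarrow> a \<in> I \<Longrightarrow> \<phi> g ` a \<in> I"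
proof -
  show ga: "group_action G X \<phi>" using assms unfolding dynamical_ideal_def by blast
  show "group G" using ga unfolding group_action_def group_hom_def by blast
  show "I \<subseteq> Pow X" "{} \<in> I"
    using assms unfolding dynamical_ideal_def is_ideal_on_def by blast+
  show "\<And>a b. a \<in> I \<Longrightarrow> b \<subseteq> a \<Longrightarrow> b \<in> I"
    "\<And>a b. a \<in> I \<Longrightarrow> b \<in> I \<Longrightarrow> a \<union> b \<in> I"
    "\<And>g a. g \<in> carrier G \<Longrightarrow> a \<in> I \<Longrightarrow> \<phi> g ` a \<in> I"
    using assms unfolding dynamical_ideal_def is_ideal_on_def by blast+
qed

lemma large_equiv:
  assumes D: "dynamical_ideal G X \<phi> I" and L: "is_large G \<phi> I A B"
    and g: "g \<in> carrier G" and AX: "A \<subseteq> X" and BX: "B \<subseteq> X"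
  shows "is_large G \<phi> I (\<phi> g ` A) (\<phi> g ` B)"
  unfolding is_large_def
proof
  fix c assume c: "c \<in> I"
  interpret ga: group_action G X \<phi> using di_facts[OF D] by simp
  interpret gr: group G using di_facts[OF D] by simp
  have cX: "c \<subseteq> X" using c di_facts(3)[OF D] by auto
  have ig: "inv\<^bsub>G\<^esub> g \<in> carrier G" using g by simp
  have "\<phi> (inv\<^bsub>G\<^esub> g) ` c \<in> I" using di_facts(7)[OF D ig c] .
  then obtain h where h: "h \<in> pstab G \<phi> A" and hc: "\<phi> (inv\<^bsub>G\<^esub> g) ` c \<subseteq> \<phi> h ` B"
    using L unfolding is_large_def by blast
  have hG: "h \<in> carrier G" using h unfolding pstab_def by auto
  define k where "k = g \<otimes>\<^bsub>G\<^esub> h \<otimes>\<^bsub>G\<^esub> inv\<^bsub>G\<^esub> g"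
  have kG: "k \<in> carrier G" unfolding k_def using g hG by simp
  have ghG: "g \<otimes>\<^bsub>G\<^esub> h \<in> carrier G" using g hG by simp
  have kx: "\<phi> k (\<phi> g x) = \<phi> g (\<phi> h x)" if xX: "x \<in> X" for x
  proof -
    have gx: "\<phi> g x \<in> X" using ga.element_image[OF g xX refl] .
    have "\<phi> k (\<phi> g x) = \<phi> (g \<otimes>\<^bsub>G\<^esub> h) (\<phi> (inv\<^bsub>G\<^esub> g) (\<phi> g x))"
      unfolding k_def by (rule ga.composition_rule[OF gx ghG ig])
    also have "\<phi> (inv\<^bsub>G\<^esub> g) (\<phi> g x) = x" by (rule ga.orbit_sym_aux[OF g xX refl])
    also have "\<phi> (g \<otimes>\<^bsub>G\<^esub> h) x = \<phi> g (\<phi> h x)" by (rule ga.composition_rule[OF xX g hG])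
    finally show ?thesis .
  qed
  show "\<exists>k\<in>pstab G \<phi> (\<phi> g ` A). c \<subseteq> \<phi> k ` \<phi> g ` B"
  proof (intro bexI)
    have "\<phi> k y = y" if y: "y \<in> \<phi> g ` A" for y
    proof -
      obtain x where x: "x \<in> A" "y = \<phi> g x" using y by blast
      have "\<phi> h x = x" using h x(1) unfolding pstab_def by blast
      then show ?thesis using kx[of x] x AX by auto
    qed
    then show "k \<in> pstab G \<phi> (\<phi> g ` A)"
      unfolding pstab_def using kG by blast
    show "c \<subseteq> \<phi> k ` \<phi> g ` B"
    proof
      fix y assume y: "y \<in> c"
      then have "\<phi> (inv\<^bsub>G\<^esub> g) y \<in> \<phi> h ` B" using hc by auto
      then obtain z where z: "z \<in> B" "\<phi> (inv\<^bsub>G\<^esub> g) y = \<phi> h z" by auto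
      have yX: "y \<in> X" using cX y by auto
      have "\<phi> g (\<phi> (inv\<^bsub>G\<^esub> g) y) = y"
        using ga.orbit_sym_aux[OF ig yX refl] g by simp
      have zX: "z \<in> X" using z(1) BX by blast
      then have "\<phi> k (\<phi> g z) = y" using kx[OF zX] z(2) \<open>\<phi> g (\<phi> (inv\<^bsub>G\<^esub> g) y) = y\<close> by simp
      then show "y \<in> \<phi> k ` \<phi> g ` B" using z by auto
    qed
  qed
qed

definition Lg where "Lg G \<phi> I A = (SOME b. b \<in> I \<and> is_large G \<phi> I A b)"

lemma Lg_prop:
  assumes "cofinal_orbits G \<phi> I" "A \<in> I"
  shows "Lg G \<phi> I A \<in> I \<and> is_large G \<phi> I A (Lg G \<phi> I A)"
  using assms unfolding cofinal_orbits_def Lg_def by (metis (mono_tags, lifting) someI_ex)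

definition stepg where
  "stepg G \<phi> I S b a = (let b2 = Lg G \<phi> I (S \<union> a);
     g = (SOME g. g \<in> pstab G \<phi> S \<and> \<phi> g ` (a \<union> b2) \<subseteq> b) in (g, S \<union> \<phi> g ` a, \<phi> g ` b2))"

lemma step_prop:
  assumes D: "dynamical_ideal G X \<phi> I" and C: "cofinal_orbits G \<phi> I"
    and S: "S \<in> I" and b: "b \<in> I" and L: "is_large G \<phi> I S b" and a: "a \<in> I"
    and st: "stepg G \<phi> I S b a = (g, S', b')"
  shows "g \<in> pstab G \<phi> S \<and> \<phi> g ` a \<subseteq> b \<and> b' \<subseteq> b \<and> S' = S \<union> \<phi> g ` a \<and>
         S' \<in> I \<and> b' \<in> I \<and> is_large G \<phi> I S' b'"
proof -
  interpret ga: group_action G X \<phi> using di_facts[OF D] by simp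
  interpret gr: group G using di_facts[OF D] by simp
  define b2 where "b2 = Lg G \<phi> I (S \<union> a)"
  have Sa: "S \<union> a \<in> I" using di_facts(6)[OF D S a] .
  have b2: "b2 \<in> I" "is_large G \<phi> I (S \<union> a) b2" using Lg_prop[OF C Sa] b2_def by auto
  have c: "a \<union> b2 \<in> I" using di_facts(6)[OF D a b2(1)] .
  obtain h where h: "h \<in> pstab G \<phi> S" and hc: "a \<union> b2 \<subseteq> \<phi> h ` b"
    using L c unfolding is_large_def by blast
  have hG: "h \<in> carrier G" using h unfolding pstab_def by auto
  have SX: "S \<subseteq> X" and bX: "b \<subseteq> X" and aX: "a \<subseteq> X" and b2X: "b2 \<subseteq> X"
    using S b a b2 di_facts(3)[OF D] by auto
  have ex: "\<exists>g. g \<in> pstab G \<phi> S \<and> \<phi> g ` (a \<union> b2) \<subseteq> b"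
  proof (intro exI conjI)
    show "inv\<^bsub>G\<^esub> h \<in> pstab G \<phi> S" using h hG SX ga.orbit_sym_aux[OF hG]
      unfolding pstab_def by (auto simp: subset_iff)
    show "\<phi> (inv\<^bsub>G\<^esub> h) ` (a \<union> b2) \<subseteq> b"
    proof
      fix y assume "y \<in> \<phi> (inv\<^bsub>G\<^esub> h) ` (a \<union> b2)"
      then obtain x where x: "x \<in> a \<union> b2" "y = \<phi> (inv\<^bsub>G\<^esub> h) x" by auto
      then obtain z where z: "z \<in> b" "x = \<phi> h z" using hc by auto
      then show "y \<in> b" using x ga.orbit_sym_aux[OF hG, of z x] bX by auto
    qed
  qed
  define g0 where "g0 = (SOME g. g \<in> pstab G \<phi> S \<and> \<phi> g ` (a \<union> b2) \<subseteq> b)"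
  have g0: "g0 \<in> pstab G \<phi> S" "\<phi> g0 ` (a \<union> b2) \<subseteq> b"
    using someI_ex[OF ex] g0_def by auto
  have eqs: "g = g0" "S' = S \<union> \<phi> g0 ` a" "b' = \<phi> g0 ` b2"
    using st unfolding stepg_def Let_def b2_def[symmetric] g0_def[symmetric] by auto
  have g0G: "g0 \<in> carrier G" using g0 unfolding pstab_def by auto
  have fix0: "\<phi> g0 ` S = S" using g0(1) unfolding pstab_def by force
  have "is_large G \<phi> I (\<phi> g0 ` (S \<union> a)) (\<phi> g0 ` b2)"
    using large_equiv[OF D b2(2) g0G _ b2X] SX aX by auto
  moreover have "\<phi> g0 ` (S \<union> a) = S \<union> \<phi> g0 ` a" using fix0 by (simp add: image_Un)
  ultimately show ?thesis using eqs g0 di_facts(6,7)[OF D] S a b2 g0G by auto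
qed

primrec Rg where
  "Rg G \<phi> I a 0 = (\<one>\<^bsub>G\<^esub>, a 0, Lg G \<phi> I (a 0))"
| "Rg G \<phi> I a (Suc n) = stepg G \<phi> I (fst (snd (Rg G \<phi> I a n))) (snd (snd (Rg G \<phi> I a n))) (a (Suc n))"

lemma Rg_local: "(\<And>i. i \<le> n \<Longrightarrow> a i = a' i) \<Longrightarrow> Rg G \<phi> I a n = Rg G \<phi> I a' n"
  by (induction n) auto

lemma Rg_inv:
  assumes D: "dynamical_ideal G X \<phi> I" and C: "cofinal_orbits G \<phi> I"
    and A: "\<And>n. a n \<in> I"
  shows "fst (Rg G \<phi> I a n) \<in> pstab G \<phi> (\<Union>m<n. \<phi> (fst (Rg G \<phi> I a m)) ` a m) \<and>
    fst (snd (Rg G \<phi> I a n)) = (\<Union>m\<le>n. \<phi> (fst (Rg G \<phi> I a m)) ` a m) \<and>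
    fst (snd (Rg G \<phi> I a n)) \<in> I \<and> snd (snd (Rg G \<phi> I a n)) \<in> I \<and>
    is_large G \<phi> I (fst (snd (Rg G \<phi> I a n))) (snd (snd (Rg G \<phi> I a n))) \<and>
    snd (snd (Rg G \<phi> I a n)) \<subseteq> Lg G \<phi> I (a 0) \<and>
    \<phi> (fst (Rg G \<phi> I a n)) ` a n \<subseteq> a 0 \<union> Lg G \<phi> I (a 0)"
proof (induction n)
  case 0
  interpret ga: group_action G X \<phi> using di_facts[OF D] by simp
  interpret gr: group G using di_facts[OF D] by simp
  have aX: "a 0 \<subseteq> X" using A di_facts(3)[OF D] by auto
  have one: "\<phi> \<one>\<^bsub>G\<^esub> x = x" if "x \<in> X" for x
    using ga.id_eq_one[symmetric] that by simp
  have im: "\<phi> \<one>\<^bsub>G\<^esub> ` a 0 = a 0" using one aX by force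
  show ?case using Lg_prop[OF C A[of 0]] im A[of 0] by (simp add: pstab_def)
next
  case (Suc n)
  obtain g S' b' where st: "stepg G \<phi> I (fst (snd (Rg G \<phi> I a n))) (snd (snd (Rg G \<phi> I a n))) (a (Suc n)) = (g, S', b')"
    by (metis prod.exhaust)
  have h: "fst (snd (Rg G \<phi> I a n)) \<in> I" "snd (snd (Rg G \<phi> I a n)) \<in> I"
    "is_large G \<phi> I (fst (snd (Rg G \<phi> I a n))) (snd (snd (Rg G \<phi> I a n)))"
    using Suc.IH by auto
  note P = step_prop[OF D C h A st]
  have eq: "{..Suc n} = insert (Suc n) {..n}" "{..<Suc n} = {..n}" by auto
  have R: "Rg G \<phi> I a (Suc n) = (g, S', b')" using st by simp
  define U where "U = (\<lambda>k. \<Union>m\<le>k. \<phi> (fst (Rg G \<phi> I a m)) ` a m)"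
  have IH1: "fst (snd (Rg G \<phi> I a n)) = U n" using Suc.IH U_def by blast
  have U1: "(\<Union>m<Suc n. \<phi> (fst (Rg G \<phi> I a m)) ` a m) = U n"
    unfolding U_def eq by simp
  have U2: "(\<Union>m\<le>Suc n. \<phi> (fst (Rg G \<phi> I a m)) ` a m) = U n \<union> \<phi> g ` a (Suc n)"
  proof -
    have "fst (Rg G \<phi> I a (Suc n)) = g" using R by (simp only: fst_conv)
    then show ?thesis by (simp only: U_def eq UN_insert Un_commute)
  qed
  have s1: "g \<in> pstab G \<phi> (U n)" using P IH1 by simp
  have s2: "S' = U n \<union> \<phi> g ` a (Suc n)" using P IH1 by simp
  have s3: "b' \<subseteq> Lg G \<phi> I (a 0)" using P Suc.IH by blast
  have s4: "\<phi> g ` a (Suc n) \<subseteq> a 0 \<union> Lg G \<phi> I (a 0)" using P Suc.IH by blast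
  show ?case unfolding R fst_conv snd_conv U1 U2 using s1 s2 s3 s4 P by blast
qed

theorem mainTheorem9:
  fixes G :: "('g, 'm) monoid_scheme" and X :: "'x set" and \<phi> :: "'g \<Rightarrow> 'x \<Rightarrow> 'x"
    and I :: "'x set set"
  assumes "dynamical_ideal G X \<phi> I"
    and "cofinal_orbits G \<phi> I"
  shows "\<exists>\<sigma>. DC_winning_II G \<phi> I \<sigma>"
proof -
  define \<sigma> where "\<sigma> xs = fst (Rg G \<phi> I (\<lambda>i. xs ! i) (length xs - 1))" for xs :: "'x set list"
  have pl: "play_II \<sigma> a n = fst (Rg G \<phi> I a n)" for a :: "nat \<Rightarrow> 'x set" and n :: nat
  proof -
    have "Rg G \<phi> I (\<lambda>i. map a [0..<Suc n] ! i) n = Rg G \<phi> I a n"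
      by (rule Rg_local) (simp only: nth_map_upt less_Suc_eq_le add_0)
    then show ?thesis unfolding play_II_def \<sigma>_def by simp
  qed
  have "DC_winning_II G \<phi> I \<sigma>"
    unfolding DC_winning_II_def Let_def
  proof (intro allI impI conjI)
    fix a :: "nat \<Rightarrow> 'x set" assume A: "\<forall>n. a n \<in> I"
    have A': "\<And>n. a n \<in> I" using A by blast
    note inv = Rg_inv[OF assms, where a=a, OF A']
    show "play_II \<sigma> a 0 = \<one>\<^bsub>G\<^esub>" by (simp add: pl)
    show "play_II \<sigma> a n \<in> pstab G \<phi> (\<Union>m<n. \<phi> (play_II \<sigma> a m) ` a m)" for n
      using inv A by (simp add: pl)
    have B: "a 0 \<union> Lg G \<phi> I (a 0) \<in> I"
      using di_facts(6)[OF assms(1)] Lg_prop[OF assms(2)] A by blast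
    have "(\<Union>n. \<phi> (play_II \<sigma> a n) ` a n) \<subseteq> a 0 \<union> Lg G \<phi> I (a 0)"
    proof (rule UN_least)
      fix n :: nat
      show "\<phi> (play_II \<sigma> a n) ` a n \<subseteq> a 0 \<union> Lg G \<phi> I (a 0)"
        unfolding pl using inv[of n] by blast
    qed
    then show "(\<Union>n. \<phi> (play_II \<sigma> a n) ` a n) \<in> I"
      using di_facts(5)[OF assms(1) B] by blast
  qed
  then show ?thesis by blast
qed

end
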